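(* Let $a\ge0$ and let $\mathfrak g=\mathfrak r'_{3,a}$, the Lie algebra with basis $\{e_1,e_2,e_3\}$ and nonzero brackets $[e_1,e_2]=ae_2-e_3$, $[e_1,e_3]=e_2+ae_3$, identified with $\mathbb R^3$ via this basis. Then $$U=\left\{\begin{pmatrix}1&0&0\\0&1&0\\0&0&1/\lambda\end{pmatrix}:\lambda\ge1\right\}$$ is a set of representatives of $\mathcal{PM}(\mathfrak g)$.
   Context: $\mathcal M(\mathfrak g)$ is the set of inner products on $\mathfrak g\cong\mathbb R^3$, with $\mathrm{GL}_3(\mathbb R)$-action $g.\langle\cdot,\cdot\rangle=\langle g^{-1}\cdot,g^{-1}\cdot\rangle$; $\langle\cdot,\cdot\rangle_0$ makes $\{e_1,e_2,e_3\}$ orthonormal. Two inner products are isometric up to scaling if $\langle\cdot,\cdot\rangle_1=k\langle f\cdot,f\cdot\rangle_2$ for some $k>0$ and Lie algebra automorphism $f$; $[\langle\cdot,\cdot\rangle]$ denotes the equivalence class and $\mathcal{PM}(\mathfrak g)$ the set of classes. A subset $U\subset\mathrm{GL}_3(\mathbb R)$ is a set of representatives of $\mathcal{PM}(\mathfrak g)$ if $\mathcal{PM}(\mathfrak g)=\{[h.\langle\cdot,\cdot\rangle_0]: h\in U\}$. *)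

theory Defs
  imports "HOL-Analysis.Analysis"
begin

text \<open>The Lie algebra r'_{3,a} on real^3, coordinates w.r.t. the basis e1,e2,e3
  (components 1,2,3). Nonzero brackets [e1,e2] = a e2 - e3, [e1,e3] = e2 + a e3,
  extended bilinearly and skew-symmetrically ([e2,e3] = 0).\<close>
definition br :: "real \<Rightarrow> real^3 \<Rightarrow> real^3 \<Rightarrow> real^3" where
  "br a x y = (let p = x$1 * y$2 - x$2 * y$1; q = x$1 * y$3 - x$3 * y$1
               in vector [0, a * p + q, - p + a * q])"

definition is_ip :: "(real^3 \<Rightarrow> real^3 \<Rightarrow> real) \<Rightarrow> bool" where
  "is_ip B \<longleftrightarrow> bilinear B \<and> (\<forall>x y. B x y = B y x) \<and> (\<forall>x. x \<noteq> 0 \<longrightarrow> B x x > 0)"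

definition ips :: "(real^3 \<Rightarrow> real^3 \<Rightarrow> real) set" where
  "ips = {B. is_ip B}"

definition ip0 :: "real^3 \<Rightarrow> real^3 \<Rightarrow> real" where
  "ip0 x y = x \<bullet> y"

definition gl_act :: "real^3^3 \<Rightarrow> (real^3 \<Rightarrow> real^3 \<Rightarrow> real) \<Rightarrow> (real^3 \<Rightarrow> real^3 \<Rightarrow> real)" where
  "gl_act g B = (\<lambda>x y. B (matrix_inv g *v x) (matrix_inv g *v y))"

definition lie_aut :: "real \<Rightarrow> real^3^3 \<Rightarrow> bool" where
  "lie_aut a f \<longleftrightarrow> invertible f \<and> (\<forall>x y. f *v br a x y = br a (f *v x) (f *v y))"

definition iso_rel :: "real \<Rightarrow> ((real^3 \<Rightarrow> real^3 \<Rightarrow> real) \<times> (real^3 \<Rightarrow> real^3 \<Rightarrow> real)) set" where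
  "iso_rel a = {(B1, B2). is_ip B1 \<and> is_ip B2 \<and>
     (\<exists>k f. k > 0 \<and> lie_aut a f \<and> (\<forall>x y. B1 x y = k * B2 (f *v x) (f *v y)))}"

definition PM :: "real \<Rightarrow> (real^3 \<Rightarrow> real^3 \<Rightarrow> real) set set" where
  "PM a = ips // iso_rel a"

definition is_reps :: "real \<Rightarrow> (real^3^3) set \<Rightarrow> bool" where
  "is_reps a U \<longleftrightarrow> (\<forall>h\<in>U. invertible h) \<and>
     PM a = {iso_rel a `` {gl_act h ip0} | h. h \<in> U}"

end

theory Submission
  imports Defs
begin

lemma minv:
  fixes A :: "real^3^3"
  assumes "invertible A"
  shows "A ** matrix_inv A = mat 1" "matrix_inv A ** A = mat 1"
proof -
  have "\<exists>A'. A ** A' = mat 1 \<and> A' ** A = mat 1" using assms unfolding invertible_def by blast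
  from someI_ex[OF this] show "A ** matrix_inv A = mat 1" "matrix_inv A ** A = mat 1"
    unfolding matrix_inv_def by auto
qed

lemma minv_unique:
  fixes A B :: "real^3^3"
  assumes "A ** B = mat 1" "B ** A = mat 1"
  shows "matrix_inv A = B"
proof -
  have inv: "invertible A" using assms unfolding invertible_def by blast
  have "matrix_inv A = (B ** A) ** matrix_inv A" using assms by (simp add: matrix_mul_lid)
  also have "\<dots> = B ** (A ** matrix_inv A)" by (simp add: matrix_mul_assoc)
  also have "\<dots> = B" using minv[OF inv] by (simp add: matrix_mul_rid)
  finally show ?thesis .
qed

lemma inv_invertible:
  fixes A :: "real^3^3"
  assumes "invertible A" shows "invertible (matrix_inv A)"
  using minv[OF assms] unfolding invertible_def by blast

lemma lie_aut_inv: assumes "lie_aut a f" shows "lie_aut a (matrix_inv f)"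
proof -
  have i: "invertible f" using assms lie_aut_def by blast
  let ?g = "matrix_inv f"
  have fg: "\<And>x. f *v (?g *v x) = x" using minv(1)[OF i] by (simp add: matrix_vector_mul_assoc)
  have gf: "\<And>x. ?g *v (f *v x) = x" using minv(2)[OF i] by (simp add: matrix_vector_mul_assoc)
  have "?g *v br a x y = br a (?g *v x) (?g *v y)" for x y
  proof -
    have "br a x y = f *v br a (?g *v x) (?g *v y)" using assms unfolding lie_aut_def by (simp add: fg)
    then show ?thesis by (simp add: gf)
  qed
  then show ?thesis using inv_invertible[OF i] unfolding lie_aut_def by blast
qed

lemma lie_aut_comp: assumes "lie_aut a f" "lie_aut a g" shows "lie_aut a (f ** g)"
  using assms unfolding lie_aut_def by (simp add: invertible_mult matrix_vector_mul_assoc[symmetric])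

lemma lie_aut_id: "lie_aut a (mat 1)"
  unfolding lie_aut_def invertible_def by (simp add: matrix_mul_lid)

lemma equiv_rel: "equiv ips (iso_rel a)"
proof (rule equivI)
  show "iso_rel a \<subseteq> ips \<times> ips" unfolding iso_rel_def ips_def by auto
  show "refl_on ips (iso_rel a)"
    unfolding refl_on_def iso_rel_def ips_def
    using lie_aut_id by (auto intro!: exI[of _ 1] exI[of _ "mat 1"])
  show "sym (iso_rel a)"
  proof (rule symI)
    fix B1 B2 assume "(B1, B2) \<in> iso_rel a"
    then obtain k f where h: "is_ip B1" "is_ip B2" "k > 0" "lie_aut a f" "\<forall>x y. B1 x y = k * B2 (f *v x) (f *v y)"
      unfolding iso_rel_def by blast
    have i: "invertible f" using h lie_aut_def by blast
    have fg: "\<And>x. f *v (matrix_inv f *v x) = x" using minv(1)[OF i] by (simp add: matrix_vector_mul_assoc)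
    have "\<forall>x y. B2 x y = (1/k) * B1 (matrix_inv f *v x) (matrix_inv f *v y)"
      using h by (simp add: fg)
    then show "(B2, B1) \<in> iso_rel a" unfolding iso_rel_def using h lie_aut_inv[OF h(4)]
      by (auto intro!: exI[of _ "1/k"])
  qed
  show "trans (iso_rel a)"
  proof (rule transI)
    fix B1 B2 B3 assume "(B1, B2) \<in> iso_rel a" "(B2, B3) \<in> iso_rel a"
    then obtain k f k' g where h: "is_ip B1" "is_ip B3" "k > 0" "lie_aut a f" "\<forall>x y. B1 x y = k * B2 (f *v x) (f *v y)"
      "k' > 0" "lie_aut a g" "\<forall>x y. B2 x y = k' * B3 (g *v x) (g *v y)"
      unfolding iso_rel_def by blast
    have "\<forall>x y. B1 x y = (k*k') * B3 ((g ** f) *v x) ((g ** f) *v y)"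
      using h by (simp add: matrix_vector_mul_assoc[symmetric])
    then show "(B1, B3) \<in> iso_rel a" unfolding iso_rel_def using h lie_aut_comp[OF h(7) h(4)]
      by (auto intro!: exI[of _ "k*k'"])
  qed
qed


lemma decomp3: "(x::real^3) = x$1 *\<^sub>R axis 1 1 + x$2 *\<^sub>R axis 2 1 + x$3 *\<^sub>R axis 3 1"
  by (simp add: vec_eq_iff forall_3 axis_def)

lemma bil3:
  assumes "bilinear B"
  shows "B (x1 *\<^sub>R p + x2 *\<^sub>R q + x3 *\<^sub>R s) (y1 *\<^sub>R p + y2 *\<^sub>R q + y3 *\<^sub>R s) =
    x1*y1*B p p + x1*y2*B p q + x1*y3*B p s + x2*y1*B q p + x2*y2*B q q + x2*y3*B q s
    + x3*y1*B s p + x3*y2*B s q + x3*y3*B s s"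
  using assms by (simp add: bilinear_ladd bilinear_radd bilinear_lmul bilinear_rmul algebra_simps)

lemma gram:
  fixes x y :: "real^3" and B :: "real^3 \<Rightarrow> real^3 \<Rightarrow> real"
  assumes "bilinear B"
  shows "B x y = x$1*y$1*B (axis 1 1) (axis 1 1) + x$1*y$2*B (axis 1 1) (axis 2 1) + x$1*y$3*B (axis 1 1) (axis 3 1)
    + x$2*y$1*B (axis 2 1) (axis 1 1) + x$2*y$2*B (axis 2 1) (axis 2 1) + x$2*y$3*B (axis 2 1) (axis 3 1)
    + x$3*y$1*B (axis 3 1) (axis 1 1) + x$3*y$2*B (axis 3 1) (axis 2 1) + x$3*y$3*B (axis 3 1) (axis 3 1)"
  by (subst decomp3[of x], subst decomp3[of y], rule bil3[OF assms])

definition colmat :: "real^3 \<Rightarrow> real^3 \<Rightarrow> real^3 \<Rightarrow> real^3^3" where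
  "colmat z U W = (\<chi> i j. if j = 1 then z$i else if j = 2 then U$i else W$i)"

lemma colmat_mult: "colmat z U W *v x = x$1 *\<^sub>R z + x$2 *\<^sub>R U + x$3 *\<^sub>R W"
  by (simp add: vec_eq_iff matrix_vector_mult_def colmat_def sum_3 algebra_simps)

lemma colmat_aut:
  assumes "z$1 = 1" "U$1 = 0" "W$1 = 0" "W$2 = - U$3" "W$3 = U$2" "U$2^2 + U$3^2 > 0"
  shows "lie_aut a (colmat z U W)"
proof -
  have "det (colmat z U W) = U$2^2 + U$3^2"
    using assms by (simp add: det_3 colmat_def power2_eq_square)
  then have "det (colmat z U W) \<noteq> 0" using assms(6) by linarith
  then have "invertible (colmat z U W)" by (simp add: invertible_det_nz)
  moreover have "colmat z U W *v br a x y = br a (colmat z U W *v x) (colmat z U W *v y)" for x y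
    using assms by (simp add: colmat_mult br_def Let_def vec_eq_iff forall_3 algebra_simps)
  ultimately show ?thesis unfolding lie_aut_def by blast
qed


lemma ab_exists:
  fixes c d :: real
  shows "\<exists>\<alpha> \<beta>. \<alpha>^2+\<beta>^2>0 \<and> \<alpha>*\<beta>*d + (\<alpha>^2-\<beta>^2)*c = 0 \<and> (\<alpha>^2-\<beta>^2)*d - 4*\<alpha>*\<beta>*c \<ge> 0"
proof (cases "c = 0 \<and> d \<le> 0")
  case True
  then show ?thesis by (intro exI[of _ 0] exI[of _ 1]) auto
next
  case False
  define S where "S = sqrt (d^2 + 4*c^2)"
  have S2: "S^2 = d^2+4*c^2" unfolding S_def by simp
  have S0: "S \<ge> 0" unfolding S_def by simp
  have Sd: "S \<ge> \<bar>d\<bar>" unfolding S_def by (rule real_le_rsqrt) (simp add: power2_abs)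
  have nz: "(d+S)^2 + (-2*c)^2 > 0"
  proof -
    have "d + S \<noteq> 0 \<or> c \<noteq> 0"
    proof (rule ccontr)
      assume "\<not> ?thesis"
      then have "c = 0" "d + S = 0" by auto
      then have "S = \<bar>d\<bar>" using S2 S0 by (simp add: real_sqrt_abs S_def)
      then show False using False \<open>c=0\<close> \<open>d+S=0\<close> by auto
    qed
    then have D: "(d+S)^2 > 0 \<or> c^2 > 0" by auto
    have A: "(d+S)^2 \<ge> 0" "c^2 \<ge> 0" by simp_all
    have "(-2*c)^2 = 4*c^2" by (simp add: power2_eq_square)
    then show ?thesis using A D by linarith
  qed
  have e1: "(d+S)*(-2*c)*d + ((d+S)^2-(-2*c)^2)*c = 0"
    using S2 by (simp add: algebra_simps power2_eq_square)
  have e2: "((d+S)^2-(-2*c)^2)*d - 4*(d+S)*(-2*c)*c = 2*(d+S)*S^2"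
    using S2 by (simp add: algebra_simps power2_eq_square)
  have "2*(d+S)*S^2 \<ge> 0" using Sd S0 by simp
  then show ?thesis using nz e1 e2 by (intro exI[of _ "d+S"] exI[of _ "-2*c"]) simp
qed

lemma main:
  assumes ip: "is_ip B"
  shows "\<exists>l\<ge>1. \<exists>k>0. \<exists>f. lie_aut a f \<and> (\<forall>x y. x$1*y$1 + x$2*y$2 + l^2*(x$3*y$3) = k * B (f*v x) (f*v y))"
proof -
  have bil: "bilinear B" and sym: "\<And>x y. B x y = B y x" and pos: "\<And>x. x \<noteq> 0 \<Longrightarrow> B x x > 0"
    using ip unfolding is_ip_def by auto
  let ?b = "\<lambda>i j. B (axis i 1) (axis j 1)"
  obtain \<alpha> \<beta> where ab: "\<alpha>^2+\<beta>^2>0" "\<alpha>*\<beta>*(?b 3 3 - ?b 2 2) + (\<alpha>^2-\<beta>^2)*?b 2 3 = 0"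
    "(\<alpha>^2-\<beta>^2)*(?b 3 3 - ?b 2 2) - 4*\<alpha>*\<beta>*?b 2 3 \<ge> 0"
    using ab_exists by blast
  define u :: "real^3" where "u = vector [0, \<alpha>, \<beta>]"
  define w :: "real^3" where "w = vector [0, -\<beta>, \<alpha>]"
  have s32: "?b 3 2 = ?b 2 3" using sym by simp
  have uw: "B u w = 0"
    using ab(2) unfolding u_def w_def
    by (subst gram[OF bil]) (simp add: s32 algebra_simps power2_eq_square)
  have wu: "B w u = 0" using uw sym by simp
  have uuww: "B w w - B u u = (\<alpha>^2-\<beta>^2)*(?b 3 3 - ?b 2 2) - 4*\<alpha>*\<beta>*?b 2 3"
    unfolding u_def w_def
    by (subst gram[OF bil], subst gram[OF bil]) (simp add: s32 algebra_simps power2_eq_square)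
  have unz: "u \<noteq> 0" and wnz: "w \<noteq> 0" using ab(1) unfolding u_def w_def
    by (auto simp: vec_eq_iff forall_3)
  define N2 where "N2 = B u u"
  define N3 where "N3 = B w w"
  have N2p: "N2 > 0" unfolding N2_def using pos[OF unz] .
  have N23: "N2 \<le> N3" using uuww ab(3) unfolding N2_def N3_def by linarith
  define c1 where "c1 = - B (axis 1 1) u / N2"
  define c2 where "c2 = - B (axis 1 1) w / N3"
  define z where "z = axis 1 1 + c1 *\<^sub>R u + c2 *\<^sub>R w"
  have N3p: "N3 > 0" using N2p N23 by linarith
  have "B z u = B (axis 1 1) u + c1 * N2 + c2 * B w u"
    unfolding z_def N2_def using bil by (simp add: bilinear_ladd bilinear_lmul)
  then have zu: "B z u = 0" using N2p wu unfolding c1_def by simp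
  have "B z w = B (axis 1 1) w + c1 * B u w + c2 * N3"
    unfolding z_def N3_def using bil by (simp add: bilinear_ladd bilinear_lmul)
  then have zw: "B z w = 0" using N3p uw unfolding c2_def by simp
  have z1: "z$1 = 1" unfolding z_def u_def w_def by (simp add: axis_def)
  then have znz: "z \<noteq> 0" by auto
  define N1 where "N1 = B z z"
  have N1p: "N1 > 0" unfolding N1_def using pos[OF znz] .
  define r where "r = sqrt (N1/N2)"
  define l where "l = sqrt (N3/N2)"
  define k where "k = 1/N1"
  have r2: "r^2 = N1/N2" unfolding r_def using N1p N2p by simp
  have l2: "l^2 = N3/N2" unfolding l_def using N3p N2p by simp
  have l1: "l \<ge> 1" unfolding l_def using N23 N2p by simp
  have rp: "r > 0" unfolding r_def using N1p N2p by simp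
  define f where "f = colmat z (r *\<^sub>R u) (r *\<^sub>R w)"
  have aut: "lie_aut a f" unfolding f_def
    apply (rule colmat_aut)
    using z1 rp ab(1) unfolding u_def w_def
       apply (simp_all add: power_mult_distrib)
    by (metis distrib_left mult_pos_pos zero_less_power)
  have "x$1*y$1 + x$2*y$2 + l^2*(x$3*y$3) = k * B (f*v x) (f*v y)" for x y
  proof -
    have Beq: "B (f*v x) (f*v y) = x$1*y$1*N1 + x$2*y$2*(r^2*N2) + x$3*y$3*(r^2*N3)"
    proof -
      have h: "B z (r *\<^sub>R u) = 0" "B z (r *\<^sub>R w) = 0" "B (r *\<^sub>R u) z = 0" "B (r *\<^sub>R w) z = 0"
        "B (r *\<^sub>R u) (r *\<^sub>R w) = 0" "B (r *\<^sub>R w) (r *\<^sub>R u) = 0"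
        "B (r *\<^sub>R u) (r *\<^sub>R u) = r^2*N2" "B (r *\<^sub>R w) (r *\<^sub>R w) = r^2*N3"
        using bil zu zw uw wu sym[of u z] sym[of w z]
        by (simp_all add: bilinear_lmul bilinear_rmul N2_def N3_def power2_eq_square)
      show ?thesis unfolding f_def colmat_mult bil3[OF bil] h N1_def by simp
    qed
    have e1: "r^2*N2 = N1" using r2 N2p by (simp add: field_simps)
    have e3: "N3 = N2*l^2" using l2 N2p by (simp add: field_simps)
    have e4: "r^2*N3 = N1*l^2" unfolding e3 e1[symmetric] by (simp add: algebra_simps)
    have "B (f*v x) (f*v y) = N1*(x$1*y$1 + x$2*y$2 + l^2*(x$3*y$3))"
      unfolding Beq e1 e4 by (simp add: algebra_simps)
    then show ?thesis unfolding k_def using N1p by simp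
  qed
  then show ?thesis using l1 aut N1p unfolding k_def
    by (intro exI[of _ l] conjI exI[of _ "1/N1"] exI[of _ f]) auto
qed


definition Q :: "real \<Rightarrow> real^3 \<Rightarrow> real^3 \<Rightarrow> real" where
  "Q l x y = x$1*y$1 + x$2*y$2 + l^2*(x$3*y$3)"

lemma Q_ip: assumes "l \<ge> 1" shows "is_ip (Q l)"
proof -
  have "bilinear (Q l)" unfolding bilinear_def
    by (auto intro!: linearI simp: Q_def algebra_simps)
  moreover have "Q l x y = Q l y x" for x y unfolding Q_def by (simp add: algebra_simps)
  moreover have "Q l x x > 0" if "x \<noteq> 0" for x
  proof -
    have "x$1 \<noteq> 0 \<or> x$2 \<noteq> 0 \<or> x$3 \<noteq> 0" using that by (auto simp: vec_eq_iff forall_3)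
    moreover have "l^2 > 0" using assms by simp
    ultimately have "x$1*x$1 > 0 \<or> x$2*x$2 > 0 \<or> l^2*(x$3*x$3) > 0"
      by (auto simp: zero_less_mult_iff not_less_iff_gr_or_eq)
    moreover have "x$1*x$1 \<ge> 0" "x$2*x$2 \<ge> 0" "l^2*(x$3*x$3) \<ge> 0" by simp_all
    ultimately show ?thesis unfolding Q_def by linarith
  qed
  ultimately show ?thesis unfolding is_ip_def by blast
qed

definition hm :: "real \<Rightarrow> real^3^3" where
  "hm l = vector [vector [1, 0, 0], vector [0, 1, 0], vector [0, 0, 1 / l]]"
definition gm :: "real \<Rightarrow> real^3^3" where
  "gm l = vector [vector [1, 0, 0], vector [0, 1, 0], vector [0, 0, l]]"

lemma hg: assumes "l \<ge> 1" shows "hm l ** gm l = mat 1" "gm l ** hm l = mat 1"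
  using assms by (auto simp: hm_def gm_def vec_eq_iff forall_3 matrix_matrix_mult_def sum_3 mat_def)

lemma gl_Q: assumes "l \<ge> 1" shows "gl_act (hm l) ip0 = Q l"
proof -
  have "matrix_inv (hm l) = gm l" using minv_unique hg[OF assms] by blast
  then show ?thesis
    by (auto simp: fun_eq_iff gl_act_def ip0_def inner_vec_def sum_3 matrix_vector_mult_def gm_def Q_def
        power2_eq_square algebra_simps)
qed

theorem proposition3p10:
  fixes a :: real
  assumes "a \<ge> 0"
  shows "is_reps a {vector [vector [1, 0, 0], vector [0, 1, 0], vector [0, 0, 1 / l]] | l::real. l \<ge> 1}"
proof -
  have U: "{vector [vector [1, 0, 0], vector [0, 1, 0], vector [0, 0, 1 / l]] | l::real. l \<ge> 1} = {hm l | l. l \<ge> 1}"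
    unfolding hm_def by simp
  have E: "equiv ips (iso_rel a)" by (rule equiv_rel)
  have inv: "\<forall>h\<in>{hm l | l. l \<ge> 1}. invertible h"
    using hg unfolding invertible_def by blast
  have "PM a = {iso_rel a `` {gl_act h ip0} | h. h \<in> {hm l | l. l \<ge> 1}}"
  proof
    show "PM a \<subseteq> {iso_rel a `` {gl_act h ip0} | h. h \<in> {hm l | l. l \<ge> 1}}"
    proof
      fix X assume "X \<in> PM a"
      then obtain B where B: "B \<in> ips" "X = iso_rel a `` {B}" unfolding PM_def quotient_def by blast
      then have ipB: "is_ip B" unfolding ips_def by simp
      obtain l k f where lkf: "l \<ge> 1" "k > 0" "lie_aut a f"
        "\<forall>x y. x$1*y$1 + x$2*y$2 + l^2*(x$3*y$3) = k * B (f*v x) (f*v y)"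
        using main[OF ipB] by blast
      have "(Q l, B) \<in> iso_rel a" unfolding iso_rel_def using Q_ip[OF lkf(1)] ipB lkf
        by (auto simp: Q_def)
      then have "iso_rel a `` {Q l} = X" using E B(2) equiv_class_eq_iff by metis
      then have "X = iso_rel a `` {gl_act (hm l) ip0}" using gl_Q[OF lkf(1)] by simp
      then show "X \<in> {iso_rel a `` {gl_act h ip0} | h. h \<in> {hm l | l. l \<ge> 1}}"
        unfolding mem_Collect_eq using lkf(1) by (intro exI[of _ "hm l"]) auto
    qed
    show "{iso_rel a `` {gl_act h ip0} | h. h \<in> {hm l | l. l \<ge> 1}} \<subseteq> PM a"
    proof
      fix X assume "X \<in> {iso_rel a `` {gl_act h ip0} | h. h \<in> {hm l | l. l \<ge> 1}}"
      then obtain l where l: "l \<ge> 1" "X = iso_rel a `` {gl_act (hm l) ip0}" by blast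
      have "Q l \<in> ips" using Q_ip[OF l(1)] unfolding ips_def by simp
      then show "X \<in> PM a" unfolding PM_def l(2) gl_Q[OF l(1)] by (rule quotientI)
    qed
  qed
  then show ?thesis unfolding is_reps_def U using inv by blast
qed

end
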